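(* For all $f,g\in\mathcal B_1(2^\omega)$, $f\le_{\mathbf{tt1}} g$ if and only if $|f|_\alpha\le|g|_\alpha$.
   Context: $\mathcal B_1(2^\omega)$: functions $2^\omega\to\mathbb R$ that are pointwise limits of sequences of continuous functions. Optimal derivation sequence: for $\mathcal C\subseteq\mathcal P(X)$, $X$ a compact metric space, define $P^0=X$, $P^{\nu+1}=P^\nu\setminus\bigcup\{U\subseteq X \text{ open}: P^\nu\cap U\subseteq C\text{ for some }C\in\mathcal C\}$, and $P^\lambda=\bigcap_{\nu<\lambda}P^\nu$ for limit $\lambda$. Bourgain rank: for $f\in\mathcal B_1(2^\omega)$, $p\in\mathbb Q$, $\varepsilon\in\mathbb Q^+$, let $P^\nu_{f,p,\varepsilon}$ be the optimal derivation sequence for $\{f^{-1}((-\infty,p+\varepsilon)),f^{-1}((p-\varepsilon,\infty))\}$, let $\alpha(f,p,\varepsilon)$ be the least $\nu$ with $P^\nu_{f,p,\varepsilon}=\emptyset$, and $|f|_\alpha=\sup_{p,\varepsilon}\alpha(f,p,\varepsilon)$. Questions: for $y\in\mathbb R$, $p\in\mathbb Q$, $\varepsilon\in\mathbb Q^+$, a bit $b\in\{0,1\}$ is a correct answer to "$y\lesssim_\varepsilon p$" if either $b=1$ and $y<p+\varepsilon$, or $b=0$ and $y>p-\varepsilon$. $f\le_{\mathbf{tt1}} g$ means: for every $p\in\mathbb Q,\varepsilon\in\mathbb Q^+$ there are a continuous $k:2^\omega\to2^\omega$, $q\in\mathbb Q$, $\delta\in\mathbb Q^+$, $r\in\omega$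 and $h:2^{r+1}\to\{0,1\}$ such that for every $A\in2^\omega$, if $b$ is a correct answer to $g(k(A))\lesssim_\delta q$ then $h(A\upharpoonright r,b)$ is a correct answer to $f(A)\lesssim_\varepsilon p$. *)

theory Defs
  imports "HOL-Analysis.Analysis"
begin

text \<open>All ranks involved are countable ordinals. We index transfinite sequences by an
uncountable well-order (a well-ordering of the reals), which contains (an initial segment
isomorphic to) all countable ordinals.\<close>

definition wo_real :: "real rel" where
  "wo_real = (SOME r. well_order_on UNIV r)"

lemma wo_real: "well_order_on UNIV wo_real"
  unfolding wo_real_def by (rule someI_ex) (rule well_order_on)

typedef cord = "UNIV :: real set" by simp

instantiation cord :: linorder
begin
definition less_eq_cord :: "cord \<Rightarrow> cord \<Rightarrow> bool" where
  "less_eq_cord x y \<longleftrightarrow> (Rep_cord x, Rep_cord y) \<in> wo_real"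
definition less_cord :: "cord \<Rightarrow> cord \<Rightarrow> bool" where
  "less_cord x y \<longleftrightarrow> x \<le> y \<and> x \<noteq> y"
instance
proof
  have W: "well_order_on UNIV wo_real" by (rule wo_real)
  then have refl: "refl_on UNIV wo_real" and tr: "trans wo_real"
    and an: "antisym wo_real" and tot: "total_on UNIV wo_real"
    unfolding well_order_on_def linear_order_on_def partial_order_on_def preorder_on_def
    by auto
  fix x y z :: cord
  show "(x < y) = (x \<le> y \<and> \<not> y \<le> x)"
    using an Rep_cord_inject unfolding less_cord_def less_eq_cord_def antisym_def by blast
  show "x \<le> x" using refl unfolding less_eq_cord_def refl_on_def by auto
  show "x \<le> y \<Longrightarrow> y \<le> z \<Longrightarrow> x \<le> z"
    using tr unfolding less_eq_cord_def trans_def by blast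
  show "x \<le> y \<Longrightarrow> y \<le> x \<Longrightarrow> x = y"
    using an Rep_cord_inject unfolding less_eq_cord_def antisym_def by blast
  show "x \<le> y \<or> y \<le> x"
    using tot refl Rep_cord_inject unfolding less_eq_cord_def total_on_def refl_on_def
    by (cases "Rep_cord x = Rep_cord y") auto
qed
end

instance cord :: wellorder
proof
  fix P :: "cord \<Rightarrow> bool" and a :: cord
  assume step: "\<And>x. (\<And>y. y < x \<Longrightarrow> P y) \<Longrightarrow> P x"
  have wf: "wf (wo_real - Id)" using wo_real unfolding well_order_on_def by auto
  have "\<forall>x. Rep_cord x = r \<longrightarrow> P x" for r
  proof (induct r rule: wf_induct[OF wf])
    case (1 r)
    show ?case
    proof (intro allI impI)
      fix x assume xr: "Rep_cord x = r"
      show "P x"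
      proof (rule step)
        fix y assume "y < x"
        then have "(Rep_cord y, r) \<in> wo_real - Id"
          using xr Rep_cord_inject unfolding less_cord_def less_eq_cord_def by auto
        then show "P y" using 1 by blast
      qed
    qed
  qed
  then show "P a" by blast
qed

text \<open>Cantor space \<open>2^\<omega>\<close> is \<open>nat \<Rightarrow> bool\<close> with the product topology
(bool carries the discrete topology).\<close>

type_synonym cantor = "nat \<Rightarrow> bool"

definition baire1 :: "(cantor \<Rightarrow> real) \<Rightarrow> bool" where
  "baire1 f \<longleftrightarrow> (\<exists>F :: nat \<Rightarrow> cantor \<Rightarrow> real.
      (\<forall>n. continuous_on UNIV (F n)) \<and> (\<forall>x. (\<lambda>n. F n x) \<longlonglongrightarrow> f x))"

definition deriv_step :: "'a::topological_space set set \<Rightarrow> 'a set \<Rightarrow> 'a set" where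
  "deriv_step \<C> P = P - \<Union>{U. open U \<and> (\<exists>C\<in>\<C>. P \<inter> U \<subseteq> C)}"

text \<open>The transfinite sequence \<open>P^\<nu>\<close> (with \<open>X = UNIV\<close>), indexed by a well-ordered type:
\<open>P^0 = X\<close>, \<open>P^{\<nu>+1} = deriv_step (P^\<nu>)\<close>, \<open>P^\<lambda> = \<Inter>_{\<nu><\<lambda>} P^\<nu>\<close>.\<close>
definition opt_deriv :: "'a::topological_space set set \<Rightarrow> 'i::wellorder \<Rightarrow> 'a set" where
  "opt_deriv \<C> = wfrec {(x, y). x < y} (\<lambda>R \<nu>.
     if (\<forall>x. \<nu> \<le> x) then UNIV
     else if (\<exists>\<mu>. \<mu> < \<nu> \<and> \<not> (\<exists>x. \<mu> < x \<and> x < \<nu>))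
       then deriv_step \<C> (R (THE \<mu>. \<mu> < \<nu> \<and> \<not> (\<exists>x. \<mu> < x \<and> x < \<nu>)))
     else \<Inter>{R \<mu> | \<mu>. \<mu> < \<nu>})"

definition alpha_rank :: "(cantor \<Rightarrow> real) \<Rightarrow> rat \<Rightarrow> rat \<Rightarrow> cord" where
  "alpha_rank f p \<epsilon> = (LEAST \<nu>. opt_deriv
      {f -` {..< real_of_rat (p + \<epsilon>)}, f -` {real_of_rat (p - \<epsilon>) <..}} \<nu> = {})"

definition bourgain_rank :: "(cantor \<Rightarrow> real) \<Rightarrow> cord" where
  "bourgain_rank f = (LEAST \<nu>. \<forall>p \<epsilon>. \<epsilon> > 0 \<longrightarrow> alpha_rank f p \<epsilon> \<le> \<nu>)"

text \<open>Bit \<open>1\<close> is \<open>True\<close>, bit \<open>0\<close> is \<open>False\<close>.\<close>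
definition correct_answer :: "real \<Rightarrow> rat \<Rightarrow> rat \<Rightarrow> bool \<Rightarrow> bool" where
  "correct_answer y p \<epsilon> b \<longleftrightarrow>
     (b \<and> y < real_of_rat (p + \<epsilon>)) \<or> (\<not> b \<and> y > real_of_rat (p - \<epsilon>))"

text \<open>\<open>A\<restriction>r\<close> is rendered as the list \<open>[A 0, \<dots>, A (r-1)]\<close>; \<open>h : 2^{r+1} \<rightarrow> 2\<close> as a
function of that list and the extra bit.\<close>
definition tt1_le :: "(cantor \<Rightarrow> real) \<Rightarrow> (cantor \<Rightarrow> real) \<Rightarrow> bool" where
  "tt1_le f g \<longleftrightarrow> (\<forall>p \<epsilon>. \<epsilon> > 0 \<longrightarrow>
     (\<exists>(k :: cantor \<Rightarrow> cantor) (q :: rat) (\<delta> :: rat) (r :: nat) (h :: bool list \<Rightarrow> bool \<Rightarrow> bool).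
        continuous_on UNIV k \<and> \<delta> > 0 \<and>
        (\<forall>A b. correct_answer (g (k A)) q \<delta> b \<longrightarrow>
               correct_answer (f A) p \<epsilon> (h (map A [0..<r]) b))))"

end

theory Submission imports Defs begin

lemma wf_less_set: "wf {(x, y). x < (y::'b::wellorder)}"
    using wf by (simp add: wf_def) 

lemma od_eq: "opt_deriv C \<nu> = (\<lambda>R \<nu>.
     if (\<forall>x. \<nu> \<le> x) then UNIV
     else if (\<exists>\<mu>. \<mu> < \<nu> \<and> \<not> (\<exists>x. \<mu> < x \<and> x < \<nu>))
       then deriv_step C (R (THE \<mu>. \<mu> < \<nu> \<and> \<not> (\<exists>x. \<mu> < x \<and> x < \<nu>)))
     else \<Inter>{R \<mu> | \<mu>. \<mu> < \<nu>}) (cut (opt_deriv C) {(x, y). x < y} \<nu>) \<nu>"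
  unfolding opt_deriv_def by (rule wfrec[OF wf_less_set])

lemma od_bot: "(\<forall>x. \<nu> \<le> x) \<Longrightarrow> opt_deriv C \<nu> = UNIV"
  by (subst od_eq) simp

lemma od_suc:
  assumes "\<mu> < \<nu>" "\<not> (\<exists>x. \<mu> < x \<and> x < \<nu>)"
  shows "opt_deriv C \<nu> = deriv_step C (opt_deriv C \<mu>)"
proof -
  have T: "(THE \<mu>. \<mu> < \<nu> \<and> \<not> (\<exists>x. \<mu> < x \<and> x < \<nu>)) = \<mu>"
  proof (rule the_equality)
    show "\<mu> < \<nu> \<and> \<not> (\<exists>x. \<mu> < x \<and> x < \<nu>)" using assms by blast
    fix \<mu>' assume "\<mu>' < \<nu> \<and> \<not> (\<exists>x. \<mu>' < x \<and> x < \<nu>)"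
    then show "\<mu>' = \<mu>" using assms by (metis linorder_neqE)
  qed
  have nb: "\<not> (\<forall>x. \<nu> \<le> x)" using assms(1) by (meson leD)
  show ?thesis
    apply (subst od_eq)
    using assms nb T by (auto simp: cut_apply)
qed

lemma od_lim:
  assumes "\<not> (\<forall>x. \<nu> \<le> x)" "\<not> (\<exists>\<mu>. \<mu> < \<nu> \<and> \<not> (\<exists>x. \<mu> < x \<and> x < \<nu>))"
  shows "opt_deriv C \<nu> = \<Inter>{opt_deriv C \<mu> | \<mu>. \<mu> < \<nu>}"
  apply (subst od_eq)
  using assms by (auto simp: cut_apply)

lemma deriv_step_sub: "deriv_step C P \<subseteq> P"
  unfolding deriv_step_def by blast

lemma od_anti: "\<mu> \<le> \<nu> \<Longrightarrow> opt_deriv C \<nu> \<subseteq> opt_deriv C \<mu>"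
proof (induction \<nu> rule: less_induct)
  case (less \<nu>)
  show ?case
  proof (cases "\<mu> = \<nu>")
    case False
    with less.prems have lt: "\<mu> < \<nu>" by simp
    show ?thesis
    proof (cases "\<exists>\<pi>. \<pi> < \<nu> \<and> \<not> (\<exists>x. \<pi> < x \<and> x < \<nu>)")
      case True
      then obtain \<pi> where p: "\<pi> < \<nu>" "\<not> (\<exists>x. \<pi> < x \<and> x < \<nu>)" by blast
      have "\<mu> \<le> \<pi>" using p lt by (meson not_le)
      then have "opt_deriv C \<pi> \<subseteq> opt_deriv C \<mu>" using less.IH p by blast
      then show ?thesis using od_suc[OF p, of C] deriv_step_sub by blast
    next
      case False
      have "\<not> (\<forall>x. \<nu> \<le> x)" using lt by (meson leD)
      then show ?thesis using od_lim[OF _ False, of C] lt by blast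
    qed
  qed simp
qed

lemma od_closed: "closed (opt_deriv C (\<nu>::'i::wellorder) :: 'a::topological_space set)"
proof (induction \<nu> rule: less_induct)
  case (less \<nu>)
  show ?case
  proof (cases "\<forall>x. \<nu> \<le> x")
    case True then show ?thesis by (simp add: od_bot)
  next
    case nb: False
    show ?thesis
    proof (cases "\<exists>\<pi>. \<pi> < \<nu> \<and> \<not> (\<exists>x. \<pi> < x \<and> x < \<nu>)")
      case True
      then obtain \<pi> where p: "\<pi> < \<nu>" "\<not> (\<exists>x. \<pi> < x \<and> x < \<nu>)" by blast
      have eq: "deriv_step C (opt_deriv C \<pi>) = opt_deriv C \<pi> \<inter> - \<Union>{U. open U \<and> (\<exists>C'\<in>C. opt_deriv C \<pi> \<inter> U \<subseteq> C')}"
        unfolding deriv_step_def by blast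
      have "closed (opt_deriv C \<pi> :: 'a set)" using less.IH p by blast
      then show ?thesis unfolding od_suc[OF p] eq
        by (intro closed_Int) (auto intro!: open_Union)
    next
      case False
      show ?thesis unfolding od_lim[OF nb False] using less.IH by (intro closed_Inter) blast
    qed
  qed
qed

lemma succ_ex:
  fixes \<nu> x :: "'i::wellorder"
  assumes "\<nu> < x"
  shows "\<exists>s. \<nu> < s \<and> \<not> (\<exists>y. \<nu> < y \<and> y < s) \<and> s \<le> x"
proof -
  let ?s = "LEAST y. \<nu> < y"
  have "\<nu> < ?s" by (rule LeastI[of _ x]) (rule assms)
  moreover have "\<not> (\<nu> < y \<and> y < ?s)" for y using not_less_Least by blast
  moreover have "?s \<le> x" using assms by (rule Least_le)
  ultimately show ?thesis by blast
qed

definition cyl :: "cantor \<Rightarrow> nat \<Rightarrow> cantor set" where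
  "cyl z n = {y. \<forall>i<n. y i = z i}"

lemma in_cyl[simp]: "z \<in> cyl z n"
  by (simp add: cyl_def)

lemma cyl_mono: "m \<le> n \<Longrightarrow> cyl z n \<subseteq> cyl z m"
  by (auto simp: cyl_def)

lemma cyl_same: "y \<in> cyl z n \<Longrightarrow> cyl y n = cyl z n"
  by (auto simp: cyl_def)

lemma cyl_map: "(map y [0..<n] = map z [0..<n]) \<longleftrightarrow> y \<in> cyl z n"
  by (auto simp: cyl_def map_eq_conv)

lemma open_cyl: "open (cyl z n)"
proof -
  have "open {f::cantor. \<forall>i\<in>{..<n}. f (id i) \<in> (\<lambda>i. {z i}) i}"
    by (rule product_topology_basis') (auto intro: open_discrete)
  moreover have "{f::cantor. \<forall>i\<in>{..<n}. f (id i) \<in> (\<lambda>i. {z i}) i} = cyl z n"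
    by (auto simp: cyl_def)
  ultimately show ?thesis by simp
qed

lemma cyl_basis:
  assumes "open U" "z \<in> U"
  shows "\<exists>n. cyl z n \<subseteq> U"
proof -
  have "openin (product_topology (\<lambda>i. euclidean) UNIV) U" using assms(1) by (simp add: open_fun_def)
  from product_topology_open_contains_basis[OF this assms(2)]
  obtain X where X: "z \<in> (\<Pi>\<^sub>E i\<in>UNIV. X i)" "finite {i. X i \<noteq> topspace euclidean}"
     "(\<Pi>\<^sub>E i\<in>UNIV. X i) \<subseteq> U" by blast
  obtain n where n: "{i. X i \<noteq> UNIV} \<subseteq> {..<n}" using X(2) finite_nat_bounded by fastforce
  have "cyl z n \<subseteq> (\<Pi>\<^sub>E i\<in>UNIV. X i)"
  proof
    fix y assume y: "y \<in> cyl z n"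
    have "y i \<in> X i" for i
    proof (cases "i < n")
      case True then show ?thesis using y X(1) by (auto simp: cyl_def)
    next
      case False then show ?thesis using n by auto
    qed
    then show "y \<in> (\<Pi>\<^sub>E i\<in>UNIV. X i)" by auto
  qed
  then show ?thesis using X(3) by blast
qed

lemma compact_cantor: "compact (UNIV :: cantor set)"
proof -
  have "compact_space (euclidean::bool topology)"
    by (simp add: compact_space_def compactin_euclidean_iff finite_imp_compact)
  then have "compact_space (product_topology (\<lambda>i::nat. (euclidean :: bool topology)) UNIV)"
    by (simp add: compact_space_product_topology)
  then have "compact_space (euclidean::cantor topology)"
    by (simp only: euclidean_product_topology)
  then show ?thesis by (simp add: compact_space_def compactin_euclidean_iff)
qed

lemma hausdorff_cantor: "Hausdorff_space (euclidean :: cantor topology)"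
proof -
  have "Hausdorff_space (euclidean :: bool topology)"
    unfolding Hausdorff_space_def
  proof (intro allI impI)
    fix x y :: bool assume "x \<in> topspace euclidean \<and> y \<in> topspace euclidean \<and> x \<noteq> y"
    then show "\<exists>U V. openin euclidean U \<and> openin euclidean V \<and> x \<in> U \<and> y \<in> V \<and> disjnt U V"
      by (intro exI[of _ "{x}"] exI[of _ "{y}"]) (auto simp: open_discrete)
  qed
  then have "Hausdorff_space (product_topology (\<lambda>i::nat. (euclidean :: bool topology)) UNIV)"
    by (simp add: Hausdorff_space_product_topology)
  then show ?thesis by (simp only: euclidean_product_topology)
qed

lemma baire_step:
  fixes f :: "cantor \<Rightarrow> real"
  assumes "baire1 f" "closed P" "P \<noteq> {}" "\<eta> > 0"
  shows "\<exists>U c. open U \<and> P \<inter> U \<noteq> {} \<and> (\<forall>x\<in>P\<inter>U. \<bar>f x - c\<bar> < \<eta>)"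
proof -
  obtain F :: "nat \<Rightarrow> cantor \<Rightarrow> real" where cont: "\<And>n. continuous_on UNIV (F n)"
    and lim: "\<And>x. (\<lambda>n. F n x) \<longlonglongrightarrow> f x"
    using assms(1) unfolding baire1_def by blast
  define E where "E N = {x\<in>P. \<forall>n\<ge>N. \<forall>m\<ge>N. \<bar>F n x - F m x\<bar> \<le> \<eta>/3}" for N
  have Eeq: "E N = P \<inter> (\<Inter>n\<in>{N..}. \<Inter>m\<in>{N..}. {x. \<bar>F n x - F m x\<bar> \<le> \<eta>/3})" for N
    unfolding E_def by auto
  have Ecl: "closed (E N)" for N
    unfolding Eeq
    by (intro closed_Int assms(2) closed_INT ballI closed_Collect_le)
       (auto intro!: continuous_intros cont[THEN continuous_on_subset])
  have Esub: "E N \<subseteq> P" for N unfolding E_def by blast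
  have cover: "\<Union>(range E) = P"
  proof
    show "\<Union>(range E) \<subseteq> P" using Esub by blast
    show "P \<subseteq> \<Union>(range E)"
    proof
      fix x assume "x \<in> P"
      have "Cauchy (\<lambda>n. F n x)" using lim by (rule LIMSEQ_imp_Cauchy)
      then obtain M where M: "\<forall>m\<ge>M. \<forall>n\<ge>M. dist (F m x) (F n x) < \<eta>/3"
        using assms(4) unfolding Cauchy_def by (meson divide_pos_pos zero_less_numeral)
      have "x \<in> E M" unfolding E_def using \<open>x \<in> P\<close> M by (auto simp: dist_real_def less_imp_le)
      then show "x \<in> \<Union>(range E)" by blast
    qed
  qed
  let ?X = "top_of_set P"
  have "compact (UNIV \<inter> P)" by (rule compact_Int_closed[OF compact_cantor assms(2)])
  then have cP: "compact P" by simp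
  have csX: "compact_space ?X" using cP by (simp add: compact_space_subtopology compactin_euclidean_iff)
  have hX: "Hausdorff_space ?X" using hausdorff_cantor by (rule Hausdorff_space_subtopology)
  have "\<exists>N. ?X interior_of (E N) \<noteq> {}"
  proof (rule ccontr)
    assume "\<not> ?thesis"
    then have "?X interior_of \<Union>(range E) = {}"
      by (intro Baire_category_alt) (auto simp: compact_imp_locally_compact_space[OF csX]
          compact_Hausdorff_imp_regular_space[OF csX hX] closed_subset[OF Esub Ecl])
    moreover have "?X interior_of P = P" by (simp add: interior_of_openin)
    ultimately show False using cover assms(3) by simp
  qed
  then obtain N x0 where x0: "x0 \<in> ?X interior_of (E N)" by blast
  then obtain T where T: "openin ?X T" "x0 \<in> T" "T \<subseteq> E N" unfolding interior_of_def by blast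
  then obtain U1 where U1: "open U1" "T = P \<inter> U1" by (meson openin_open)
  define c where "c = F N x0"
  define U2 where "U2 = F N -` {c - \<eta>/3 <..< c + \<eta>/3}"
  have oU2: "open U2" unfolding U2_def by (intro open_vimage cont) auto
  have x0U2: "x0 \<in> U2" unfolding U2_def c_def using assms(4) by auto
  show ?thesis
  proof (intro exI conjI ballI)
    show "open (U1 \<inter> U2)" using U1 oU2 by blast
    show "P \<inter> (U1 \<inter> U2) \<noteq> {}" using T U1 x0U2 by blast
    fix x assume x: "x \<in> P \<inter> (U1 \<inter> U2)"
    then have "x \<in> E N" using T U1 by blast
    then have b: "\<forall>n\<ge>N. \<bar>F n x - F N x\<bar> \<le> \<eta>/3" unfolding E_def by auto
    have "(\<lambda>n. \<bar>F n x - F N x\<bar>) \<longlonglongrightarrow> \<bar>f x - F N x\<bar>"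
      by (intro tendsto_intros lim)
    then have "\<bar>f x - F N x\<bar> \<le> \<eta>/3" using b by (intro LIMSEQ_le_const2) auto
    moreover have "c - \<eta>/3 < F N x" "F N x < c + \<eta>/3" using x unfolding U2_def by auto
    moreover have "\<bar>f x - F N x\<bar> \<le> \<eta>/3 \<Longrightarrow> c - \<eta>/3 < F N x \<Longrightarrow> F N x < c + \<eta>/3 \<Longrightarrow> \<bar>f x - c\<bar> < \<eta>"
      unfolding abs_le_iff abs_less_iff by linarith
    ultimately show "\<bar>f x - c\<bar> < \<eta>" by blast
  qed
qed

lemma step_strict:
  fixes f :: "cantor \<Rightarrow> real"
  assumes "baire1 f" "closed P" "P \<noteq> {}" "e > 0"
  shows "deriv_step {f -` {..< a + e}, f -` {a - e <..}} P \<noteq> P"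
proof -
  obtain U c where U: "open U" "P \<inter> U \<noteq> {}" "\<forall>x\<in>P\<inter>U. \<bar>f x - c\<bar> < e"
    using baire_step[OF assms] by blast
  then obtain x0 where x0: "x0 \<in> P" "x0 \<in> U" by blast
  have "\<exists>C'\<in>{f -` {..< a + e}, f -` {a - e <..}}. P \<inter> U \<subseteq> C'"
  proof (cases "c \<le> a")
    case True
    have "P \<inter> U \<subseteq> f -` {..< a + e}"
    proof
      fix x assume "x \<in> P \<inter> U"
      then have "\<bar>f x - c\<bar> < e" using U(3) by blast
      then show "x \<in> f -` {..< a + e}" using True by (simp add: abs_less_iff)
    qed
    then show ?thesis by blast
  next
    case False
    have "P \<inter> U \<subseteq> f -` {a - e <..}"
    proof
      fix x assume "x \<in> P \<inter> U"
      then have "\<bar>f x - c\<bar> < e" using U(3) by blast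
      then show "x \<in> f -` {a - e <..}" using False by (simp add: abs_less_iff)
    qed
    then show ?thesis by blast
  qed
  then have "x0 \<notin> deriv_step {f -` {..< a + e}, f -` {a - e <..}} P"
    unfolding deriv_step_def using U(1) x0 by blast
  then show ?thesis using x0 by blast
qed

definition strict_set :: "cantor set set \<Rightarrow> 'i::wellorder set" where
  "strict_set C = {\<nu>. \<exists>s. \<nu> < s \<and> \<not> (\<exists>y. \<nu> < y \<and> y < s) \<and> opt_deriv C s \<noteq> opt_deriv C \<nu>}"

lemma countable_strict_set: "countable (strict_set C :: 'i::wellorder set)"
proof -
  define \<Phi> where "\<Phi> \<nu> \<sigma> \<longleftrightarrow> (\<exists>s. \<nu> < s \<and> \<not> (\<exists>y. \<nu> < y \<and> y < s) \<and>
     (\<exists>x. map x [0..<length \<sigma>] = \<sigma> \<and> x \<in> opt_deriv C \<nu> \<and> cyl x (length \<sigma>) \<inter> opt_deriv C s = {}))"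
    for \<nu> :: 'i and \<sigma> :: "bool list"
  have ex: "\<exists>\<sigma>. \<Phi> \<nu> \<sigma>" if nu: "\<nu> \<in> strict_set C" for \<nu>
  proof -
    obtain s where s: "\<nu> < s" "\<not> (\<exists>y. \<nu> < y \<and> y < s)" "opt_deriv C s \<noteq> opt_deriv C \<nu>"
      using nu unfolding strict_set_def by blast
    have "opt_deriv C s \<subseteq> opt_deriv C \<nu>" using s(1) by (intro od_anti) simp
    then obtain x where x: "x \<in> opt_deriv C \<nu>" "x \<notin> opt_deriv C s" using s(3) by blast
    have "open (- opt_deriv C s)" using od_closed by blast
    then obtain n where n: "cyl x n \<subseteq> - opt_deriv C s" using cyl_basis x(2) by blast
    show ?thesis unfolding \<Phi>_def
      by (intro exI[of _ "map x [0..<n]"] exI[of _ s] conjI s(1) s(2) exI[of _ x]) (use x n in auto)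
  qed
  have key: False if k1: "\<nu>1 < \<nu>2" and k2: "\<Phi> \<nu>1 \<sigma>" and k3: "\<Phi> \<nu>2 \<sigma>" for \<nu>1 \<nu>2 \<sigma>
  proof -
    obtain s x1 where A: "\<nu>1 < s" "\<not> (\<exists>y. \<nu>1 < y \<and> y < s)" "map x1 [0..<length \<sigma>] = \<sigma>"
      "cyl x1 (length \<sigma>) \<inter> opt_deriv C s = {}" using k2 unfolding \<Phi>_def by blast
    obtain x2 where B: "map x2 [0..<length \<sigma>] = \<sigma>" "x2 \<in> opt_deriv C \<nu>2"
      using k3 unfolding \<Phi>_def by blast
    have "s \<le> \<nu>2" using A(1,2) k1 by (meson not_le)
    then have "x2 \<in> opt_deriv C s" using B(2) od_anti by blast
    moreover have "x2 \<in> cyl x1 (length \<sigma>)" using A(3) B(1) cyl_map by metis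
    ultimately show False using A(4) by blast
  qed
  define g where "g \<nu> = (SOME \<sigma>. \<Phi> \<nu> \<sigma>)" for \<nu>
  have g: "\<Phi> \<nu> (g \<nu>)" if "\<nu> \<in> strict_set C" for \<nu>
    unfolding g_def using ex[OF that] by (rule someI_ex)
  have "inj_on g (strict_set C)"
  proof (rule inj_onI)
    fix \<nu>1 \<nu>2 assume a: "\<nu>1 \<in> strict_set C" "\<nu>2 \<in> strict_set C" "g \<nu>1 = g \<nu>2"
    show "\<nu>1 = \<nu>2"
    proof (rule ccontr)
      assume "\<nu>1 \<noteq> \<nu>2"
      then consider "\<nu>1 < \<nu>2" | "\<nu>2 < \<nu>1" by (meson linorder_neqE)
      then show False
        using key g[OF a(1)] g[OF a(2)] a(3) by metis
    qed
  qed
  moreover have "countable (g ` strict_set C)" by simp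
  ultimately show ?thesis using countable_image_inj_on by blast
qed

lemma uncountable_cord: "uncountable (UNIV :: cord set)"
proof
  assume "countable (UNIV :: cord set)"
  then have "countable (Rep_cord ` UNIV)" by simp
  moreover have "Rep_cord ` UNIV = (UNIV :: real set)"
    using type_definition.Rep_range[OF type_definition_cord] by simp
  ultimately show False using uncountable_UNIV_real by simp
qed

abbreviation Cf :: "(cantor \<Rightarrow> real) \<Rightarrow> real \<Rightarrow> real \<Rightarrow> cantor set set" where
  "Cf f a e \<equiv> {f -` {..< a + e}, f -` {a - e <..}}"

lemma in_strict_set:
  assumes "baire1 f" "e > 0" "\<nu> < \<beta>" "opt_deriv (Cf f a e) \<nu> \<noteq> {}"
  shows "\<nu> \<in> strict_set (Cf f a e)"
proof -
  obtain s where s: "\<nu> < s" "\<not> (\<exists>y. \<nu> < y \<and> y < s)" using succ_ex[OF assms(3)] by blast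
  have "opt_deriv (Cf f a e) s = deriv_step (Cf f a e) (opt_deriv (Cf f a e) \<nu>)"
    by (rule od_suc[OF s])
  also have "\<dots> \<noteq> opt_deriv (Cf f a e) \<nu>"
    by (rule step_strict[OF assms(1) od_closed assms(4) assms(2)])
  finally show ?thesis unfolding strict_set_def using s by blast
qed

lemma exists_empty:
  assumes "baire1 f" "e > 0"
  shows "\<exists>\<nu>::cord. opt_deriv (Cf f a e) \<nu> = {}"
proof (rule ccontr)
  assume "\<not> ?thesis"
  then have ne: "opt_deriv (Cf f a e) \<nu> \<noteq> {}" for \<nu> :: cord by blast
  have "UNIV \<subseteq> strict_set (Cf f a e) \<union> {\<nu>::cord. \<forall>x. \<not> \<nu> < x}"
  proof
    fix \<nu> :: cord
    show "\<nu> \<in> strict_set (Cf f a e) \<union> {\<nu>. \<forall>x. \<not> \<nu> < x}"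
    proof (cases "\<exists>x. \<nu> < x")
      case True
      then obtain x where "\<nu> < x" by blast
      then show ?thesis using in_strict_set[OF assms _ ne] by blast
    qed simp
  qed
  moreover have "countable {\<nu>::cord. \<forall>x. \<not> \<nu> < x}"
  proof (cases "{\<nu>::cord. \<forall>x. \<not> \<nu> < x} = {}")
    case False
    then obtain \<nu>0 :: cord where n0: "\<forall>x. \<not> \<nu>0 < x" by auto
    have "{\<nu>::cord. \<forall>x. \<not> \<nu> < x} \<subseteq> {\<nu>0}"
      using n0 by (auto simp: not_less) (meson antisym not_le)
    then show ?thesis using countable_subset by blast
  next
    case True then show ?thesis by (metis countable_empty)
  qed
  ultimately have "countable (UNIV :: cord set)"
    using countable_strict_set countable_subset by (metis countable_Un)
  then show False using uncountable_cord by blast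
qed

lemma Cf_eq: "{f -` {..< real_of_rat (p + \<epsilon>)}, f -` {real_of_rat (p - \<epsilon>) <..}} =
   Cf f (real_of_rat p) (real_of_rat \<epsilon>)"
  by (simp add: of_rat_add of_rat_diff)

lemma alpha_empty:
  assumes "baire1 f" "\<epsilon> > 0"
  shows "opt_deriv {f -` {..< real_of_rat (p + \<epsilon>)}, f -` {real_of_rat (p - \<epsilon>) <..}} (alpha_rank f p \<epsilon>) = {}"
proof -
  have e: "real_of_rat \<epsilon> > 0" using assms(2) by simp
  show ?thesis unfolding alpha_rank_def
    by (rule LeastI_ex) (unfold Cf_eq, rule exists_empty[OF assms(1) e])
qed

lemma alpha_countable:
  assumes "baire1 f" "\<epsilon> > 0"
  shows "countable {\<nu>. \<nu> < alpha_rank f p \<epsilon>}"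
proof -
  have e: "real_of_rat \<epsilon> > 0" using assms(2) by simp
  have "{\<nu>. \<nu> < alpha_rank f p \<epsilon>} \<subseteq> strict_set (Cf f (real_of_rat p) (real_of_rat \<epsilon>))"
  proof
    fix \<nu> assume "\<nu> \<in> {\<nu>. \<nu> < alpha_rank f p \<epsilon>}"
    then have lt: "\<nu> < alpha_rank f p \<epsilon>" by simp
    then have "opt_deriv {f -` {..< real_of_rat (p + \<epsilon>)}, f -` {real_of_rat (p - \<epsilon>) <..}} \<nu> \<noteq> {}"
      unfolding alpha_rank_def by (rule not_less_Least)
    then have "opt_deriv (Cf f (real_of_rat p) (real_of_rat \<epsilon>)) \<nu> \<noteq> {}" by (metis Cf_eq)
    then show "\<nu> \<in> strict_set (Cf f (real_of_rat p) (real_of_rat \<epsilon>))"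
      using in_strict_set[OF assms(1) e lt] by blast
  qed
  then show ?thesis using countable_strict_set countable_subset by blast
qed

lemma bound_exists:
  assumes "baire1 f"
  shows "\<exists>B. \<forall>p \<epsilon>. \<epsilon> > 0 \<longrightarrow> alpha_rank f p \<epsilon> \<le> B"
proof -
  define D where "D = (\<Union>pe\<in>{pe::rat\<times>rat. snd pe > 0}. {\<nu>. \<nu> \<le> alpha_rank f (fst pe) (snd pe)})"
  have "countable D" unfolding D_def
  proof (intro countable_UN)
    fix pe :: "rat \<times> rat" assume "pe \<in> {pe. snd pe > 0}"
    then have "countable {\<nu>. \<nu> < alpha_rank f (fst pe) (snd pe)}" using alpha_countable[OF assms] by simp
    moreover have "{\<nu>. \<nu> \<le> alpha_rank f (fst pe) (snd pe)} = insert (alpha_rank f (fst pe) (snd pe)) {\<nu>. \<nu> < alpha_rank f (fst pe) (snd pe)}"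
      by auto
    ultimately show "countable {\<nu>. \<nu> \<le> alpha_rank f (fst pe) (snd pe)}" by simp
  qed simp
  then obtain B where B: "B \<notin> D" using uncountable_cord by (metis UNIV_I countable_subset subsetI)
  show ?thesis
  proof (intro exI allI impI)
    fix p \<epsilon> :: rat assume "\<epsilon> > 0"
    then have "\<not> B \<le> alpha_rank f p \<epsilon>" using B unfolding D_def by force
    then show "alpha_rank f p \<epsilon> \<le> B" by simp
  qed
qed

lemma od_pull:
  fixes k :: "cantor \<Rightarrow> cantor" and F G :: "bool \<Rightarrow> cantor set" and h :: "bool list \<Rightarrow> bool \<Rightarrow> bool"
  assumes cont: "continuous_on UNIV k"
    and red: "\<And>A b. k A \<in> G b \<Longrightarrow> A \<in> F (h (map A [0..<r]) b)"
  shows "opt_deriv {F True, F False} (\<nu>::'i::wellorder) \<subseteq> k -` opt_deriv {G True, G False} \<nu>"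
proof (induction \<nu> rule: less_induct)
  case (less \<nu>)
  show ?case
  proof (cases "\<forall>x. \<nu> \<le> x")
    case True then show ?thesis by (simp add: od_bot)
  next
    case nb: False
    show ?thesis
    proof (cases "\<exists>\<pi>. \<pi> < \<nu> \<and> \<not> (\<exists>x. \<pi> < x \<and> x < \<nu>)")
      case True
      then obtain \<pi> where p: "\<pi> < \<nu>" "\<not> (\<exists>x. \<pi> < x \<and> x < \<nu>)" by blast
      have IH: "opt_deriv {F True, F False} \<pi> \<subseteq> k -` opt_deriv {G True, G False} \<pi>"
        using less.IH p(1) by blast
      show ?thesis
      proof
        fix A assume A: "A \<in> opt_deriv {F True, F False} \<nu>"
        then have A1: "A \<in> deriv_step {F True, F False} (opt_deriv {F True, F False} \<pi>)"
          using od_suc[OF p] by blast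
        then have A2: "A \<in> opt_deriv {F True, F False} \<pi>" using deriv_step_sub by blast
        show "A \<in> k -` opt_deriv {G True, G False} \<nu>"
        proof (rule ccontr)
          assume "A \<notin> k -` opt_deriv {G True, G False} \<nu>"
          then have "k A \<notin> deriv_step {G True, G False} (opt_deriv {G True, G False} \<pi>)"
            using od_suc[OF p, of "{G True, G False}"] by simp
          moreover have "k A \<in> opt_deriv {G True, G False} \<pi>" using IH A2 by blast
          ultimately obtain V C' where V0: "open V" "k A \<in> V" "C' \<in> {G True, G False}"
              "opt_deriv {G True, G False} \<pi> \<inter> V \<subseteq> C'"
            unfolding deriv_step_def by blast
          then obtain b where "C' = G b" by blast
          then have V: "open V" "k A \<in> V" "opt_deriv {G True, G False} \<pi> \<inter> V \<subseteq> G b"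
            using V0 by auto
          define U where "U = k -` V \<inter> cyl A r"
          have oU: "open U" unfolding U_def using V(1) cont by (intro open_Int open_vimage open_cyl)
          have AU: "A \<in> U" unfolding U_def using V(2) by simp
          have "opt_deriv {F True, F False} \<pi> \<inter> U \<subseteq> F (h (map A [0..<r]) b)"
          proof
            fix B assume B: "B \<in> opt_deriv {F True, F False} \<pi> \<inter> U"
            then have "k B \<in> G b" using IH V(3) unfolding U_def by blast
            then have "B \<in> F (h (map B [0..<r]) b)" by (rule red)
            moreover have "map B [0..<r] = map A [0..<r]" using B cyl_map unfolding U_def by blast
            ultimately show "B \<in> F (h (map A [0..<r]) b)" by simp
          qed
          moreover have "F (h (map A [0..<r]) b) \<in> {F True, F False}" by (cases "h (map A [0..<r]) b") auto
          ultimately have "A \<notin> deriv_step {F True, F False} (opt_deriv {F True, F False} \<pi>)"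
            unfolding deriv_step_def using oU AU by blast
          then show False using A1 by blast
        qed
      qed
    next
      case False
      show ?thesis unfolding od_lim[OF nb False] using less.IH by blast
    qed
  qed
qed

definition Fset :: "(cantor \<Rightarrow> real) \<Rightarrow> rat \<Rightarrow> rat \<Rightarrow> bool \<Rightarrow> cantor set" where
  "Fset f p \<epsilon> b = (if b then f -` {..< real_of_rat (p + \<epsilon>)} else f -` {real_of_rat (p - \<epsilon>) <..})"

lemma Fset_pair: "{Fset f p \<epsilon> True, Fset f p \<epsilon> False} = {f -` {..< real_of_rat (p + \<epsilon>)}, f -` {real_of_rat (p - \<epsilon>) <..}}"
  by (simp add: Fset_def)

lemma correct_Fset: "correct_answer (f A) p \<epsilon> b \<longleftrightarrow> A \<in> Fset f p \<epsilon> b"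
  by (cases b) (auto simp: correct_answer_def Fset_def)

lemma alpha_le_bourgain:
  assumes "baire1 f" "\<epsilon> > 0"
  shows "alpha_rank f p \<epsilon> \<le> bourgain_rank f"
proof -
  have "\<forall>p \<epsilon>. \<epsilon> > 0 \<longrightarrow> alpha_rank f p \<epsilon> \<le> bourgain_rank f"
    unfolding bourgain_rank_def by (rule LeastI_ex) (rule bound_exists[OF assms(1)])
  then show ?thesis using assms(2) by blast
qed

lemma tt1_imp:
  assumes "baire1 g" "tt1_le f g"
  shows "bourgain_rank f \<le> bourgain_rank g"
  unfolding bourgain_rank_def[of f]
proof (rule Least_le, intro allI impI)
  fix p \<epsilon> :: rat assume e: "\<epsilon> > 0"
  obtain k q \<delta> r h where k: "continuous_on UNIV k" "\<delta> > 0"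
    and red0: "\<forall>A b. correct_answer (g (k A)) q \<delta> b \<longrightarrow> correct_answer (f A) p \<epsilon> (h (map A [0..<r]) b)"
    using assms(2) e unfolding tt1_le_def by blast
  have red: "k A \<in> Fset g q \<delta> b \<Longrightarrow> A \<in> Fset f p \<epsilon> (h (map A [0..<r]) b)" for A b
    using red0 by (simp add: correct_Fset)
  have "opt_deriv {Fset f p \<epsilon> True, Fset f p \<epsilon> False} (alpha_rank g q \<delta>)
      \<subseteq> k -` opt_deriv {Fset g q \<delta> True, Fset g q \<delta> False} (alpha_rank g q \<delta>)"
    by (rule od_pull[OF k(1)]) (rule red)
  also have "\<dots> = {}" unfolding Fset_pair using alpha_empty[OF assms(1) k(2)] by simp
  finally have "opt_deriv {f -` {..< real_of_rat (p + \<epsilon>)}, f -` {real_of_rat (p - \<epsilon>) <..}} (alpha_rank g q \<delta>) = {}"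
    unfolding Fset_pair by blast
  then have "alpha_rank f p \<epsilon> \<le> alpha_rank g q \<delta>" unfolding alpha_rank_def[of f] by (rule Least_le)
  also have "\<dots> \<le> bourgain_rank g" by (rule alpha_le_bourgain[OF assms(1) k(2)])
  finally show "alpha_rank f p \<epsilon> \<le> bourgain_rank g" .
qed

definition canon :: "cantor \<Rightarrow> nat \<Rightarrow> cantor" where
  "canon x n = (\<lambda>i. if i < n then x i else False)"

lemma canon_in: "canon x n \<in> cyl x n"
  by (simp add: canon_def cyl_def)

lemma canon_cyl: "y \<in> cyl x n \<Longrightarrow> canon y n = canon x n"
  by (auto simp: canon_def cyl_def)

lemma cyl_canon: "cyl (canon x n) n = cyl x n"
  using canon_in cyl_same by blast

lemma cyl_sym: "y \<in> cyl x n \<Longrightarrow> x \<in> cyl y n"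
  by (auto simp: cyl_def)

lemma level_ex:
  fixes F :: "bool \<Rightarrow> cantor set" and PP :: "'i::wellorder \<Rightarrow> cantor set"
  defines "PP \<equiv> opt_deriv {F True, F False}"
  assumes "x \<notin> PP \<nu>"
  shows "\<exists>\<pi> U e'. \<pi> < \<nu> \<and> open U \<and> x \<in> U \<and> PP \<pi> \<inter> U \<subseteq> F e'"
proof -
  define \<gamma> where "\<gamma> = (LEAST \<gamma>. x \<notin> PP \<gamma>)"
  have g1: "x \<notin> PP \<gamma>" unfolding \<gamma>_def by (rule LeastI[of _ \<nu>]) (rule assms(2))
  have g2: "\<gamma> \<le> \<nu>" unfolding \<gamma>_def by (rule Least_le) (rule assms(2))
  have g3: "x \<in> PP \<mu>" if "\<mu> < \<gamma>" for \<mu> using not_less_Least[OF that[unfolded \<gamma>_def]] \<gamma>_def by blast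
  show ?thesis
  proof (cases "\<forall>y. \<gamma> \<le> y")
    case True then show ?thesis using g1 by (simp add: od_bot PP_def)
  next
    case nb: False
    show ?thesis
    proof (cases "\<exists>\<pi>. \<pi> < \<gamma> \<and> \<not> (\<exists>y. \<pi> < y \<and> y < \<gamma>)")
      case True
      then obtain \<pi> where p: "\<pi> < \<gamma>" "\<not> (\<exists>y. \<pi> < y \<and> y < \<gamma>)" by blast
      have "x \<notin> deriv_step {F True, F False} (PP \<pi>)" using g1 od_suc[OF p, of "{F True, F False}"] PP_def by simp
      moreover have "x \<in> PP \<pi>" using g3 p(1) by blast
      ultimately obtain U C' where U: "open U" "x \<in> U" "C' \<in> {F True, F False}" "PP \<pi> \<inter> U \<subseteq> C'"
        unfolding deriv_step_def by blast
      then obtain e' where "C' = F e'" by blast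
      then show ?thesis using U p(1) g2 by (intro exI[of _ \<pi>] exI[of _ U] exI[of _ e']) auto
    next
      case False
      have "x \<in> PP \<gamma>" using od_lim[OF nb False, of "{F True, F False}"] g3 PP_def by auto
      then show ?thesis using g1 by blast
    qed
  qed
qed

lemma embed:
  fixes F G :: "bool \<Rightarrow> cantor set"
  assumes hG: "\<And>x. x \<in> G True \<or> x \<in> G False"
  shows "open W \<Longrightarrow> opt_deriv {F True, F False} (\<nu>::'i::wellorder) \<inter> W \<subseteq> F e \<Longrightarrow>
    z \<in> opt_deriv {G True, G False} \<nu> \<Longrightarrow> z \<notin> G (\<not> e) \<Longrightarrow>
    \<exists>k. continuous_on W k \<and> k ` W \<subseteq> cyl z m \<and> (\<forall>x\<in>W. \<forall>b. k x \<in> G b \<longrightarrow> x \<in> F b)"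
proof (induction \<nu> arbitrary: W e z m rule: less_induct)
  case (less \<nu> W e z m)
  define PP :: "'i \<Rightarrow> cantor set" where "PP = opt_deriv {F True, F False}"
  define QQ :: "'i \<Rightarrow> cantor set" where "QQ = opt_deriv {G True, G False}"
  have oW: "open W" and top: "PP \<nu> \<inter> W \<subseteq> F e" and zQ: "z \<in> QQ \<nu>" and zG: "z \<notin> G (\<not> e)"
    using less.prems unfolding PP_def QQ_def by auto
  define good where "good x n \<longleftrightarrow> cyl x n \<subseteq> W - PP \<nu> \<and> (\<exists>\<gamma><\<nu>. \<exists>e'. PP \<gamma> \<inter> cyl x n \<subseteq> F e')" for x n
  have good_cyl: "good y n \<longleftrightarrow> good x n" if "y \<in> cyl x n" for x y n
    unfolding good_def using cyl_same[OF that] by simp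
  have good_ex: "\<exists>n. good x n" if x: "x \<in> W - PP \<nu>" for x
  proof -
    obtain \<pi> U e' where pU: "\<pi> < \<nu>" "open U" "x \<in> U" "PP \<pi> \<inter> U \<subseteq> F e'"
      using level_ex[of x F \<nu>] x unfolding PP_def by blast
    have "open (U \<inter> W \<inter> - PP \<nu>)" using pU(2) oW od_closed unfolding PP_def by blast
    moreover have "x \<in> U \<inter> W \<inter> - PP \<nu>" using x pU(3) by blast
    ultimately obtain n where n: "cyl x n \<subseteq> U \<inter> W \<inter> - PP \<nu>" using cyl_basis by blast
    then have "good x n" unfolding good_def using pU(1,4) by blast
    then show ?thesis by blast
  qed
  define N where "N x = (LEAST n. good x n)" for x
  have goodN: "good x (N x)" if "x \<in> W - PP \<nu>" for x
    unfolding N_def using good_ex[OF that] by (rule LeastI_ex)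
  have N_cyl: "N y = N x" if x: "x \<in> W - PP \<nu>" and y: "y \<in> cyl x (N x)" for x y
  proof -
    have "good y (N x)" using good_cyl[OF y] goodN[OF x] by simp
    moreover have "\<not> good y n" if "n < N x" for n
    proof
      assume "good y n"
      moreover have "y \<in> cyl x n" using y cyl_mono[of n "N x"] that by auto
      ultimately have "good x n" using good_cyl by blast
      then show False using that unfolding N_def using not_less_Least by blast
    qed
    ultimately show ?thesis unfolding N_def[of y] by (intro Least_equality) (auto simp: not_less[symmetric])
  qed
  define spec where "spec x n kk \<longleftrightarrow> continuous_on (cyl x n) kk \<and> kk ` cyl x n \<subseteq> cyl z (max m n) \<and>
      (\<forall>y\<in>cyl x n. \<forall>b. kk y \<in> G b \<longrightarrow> y \<in> F b)" for x n kk
  have spec_ex: "\<exists>kk. spec x n kk" if gx: "good x n" for x n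
  proof -
    obtain \<gamma> e' where ge: "\<gamma> < \<nu>" "PP \<gamma> \<inter> cyl x n \<subseteq> F e'" using gx unfolding good_def by blast
    obtain s where s: "\<gamma> < s" "\<not> (\<exists>y. \<gamma> < y \<and> y < s)" "s \<le> \<nu>" using succ_ex[OF ge(1)] by blast
    have "z \<in> QQ s" using zQ od_anti[OF s(3)] unfolding QQ_def by blast
    then have zs: "z \<in> deriv_step {G True, G False} (QQ \<gamma>)" using od_suc[OF s(1,2), of "{G True, G False}"] unfolding QQ_def by simp
    have "\<not> (QQ \<gamma> \<inter> cyl z (max m n) \<subseteq> G (\<not> e'))"
    proof
      assume "QQ \<gamma> \<inter> cyl z (max m n) \<subseteq> G (\<not> e')"
      moreover have "G (\<not> e') \<in> {G True, G False}" by (cases e') auto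
      ultimately have "z \<notin> deriv_step {G True, G False} (QQ \<gamma>)"
        unfolding deriv_step_def using open_cyl[of z "max m n"] in_cyl[of z "max m n"] by blast
      then show False using zs by blast
    qed
    then obtain w where w: "w \<in> QQ \<gamma>" "w \<in> cyl z (max m n)" "w \<notin> G (\<not> e')" by blast
    obtain kk where kk: "continuous_on (cyl x n) kk" "kk ` cyl x n \<subseteq> cyl w (max m n)"
        "\<forall>y\<in>cyl x n. \<forall>b. kk y \<in> G b \<longrightarrow> y \<in> F b"
      using less.IH[OF ge(1) open_cyl, of x n e' w "max m n"] ge(2) w(1,3) unfolding PP_def QQ_def
      by (metis inf_commute)
    have "cyl w (max m n) = cyl z (max m n)" using cyl_same[OF w(2)] .
    then show ?thesis unfolding spec_def using kk by (intro exI[of _ kk]) auto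
  qed
  define K where "K x n = (SOME kk. spec x n kk)" for x n
  have K: "spec x n (K x n)" if "good x n" for x n
    unfolding K_def using spec_ex[OF that] by (rule someI_ex)
  define k where "k y = (if y \<in> W - PP \<nu> then K (canon y (N y)) (N y) y else z)" for y
  have Kc: "good (canon x (N x)) (N x)" if "x \<in> W - PP \<nu>" for x
    using good_cyl[OF canon_in] goodN[OF that] by blast
  have k_loc: "k y = K (canon x (N x)) (N x) y" if x: "x \<in> W - PP \<nu>" and y: "y \<in> cyl x (N x)" for x y
  proof -
    have "y \<in> W - PP \<nu>" using goodN[OF x] y unfolding good_def by blast
    moreover have "N y = N x" by (rule N_cyl[OF x y])
    moreover have "canon y (N x) = canon x (N x)" by (rule canon_cyl[OF y])
    ultimately show ?thesis unfolding k_def by simp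
  qed
  have img: "k y \<in> cyl z (max m (N y))" if "y \<in> W - PP \<nu>" for y
  proof -
    have "spec (canon y (N y)) (N y) (K (canon y (N y)) (N y))" by (rule K[OF Kc[OF that]])
    then have "K (canon y (N y)) (N y) ` cyl y (N y) \<subseteq> cyl z (max m (N y))"
      unfolding spec_def cyl_canon by blast
    then show ?thesis using k_loc[OF that in_cyl] by auto
  qed
  show ?case
  proof (intro exI conjI)
    show "k ` W \<subseteq> cyl z m"
    proof
      fix u assume "u \<in> k ` W"
      then obtain y where y: "y \<in> W" "u = k y" by blast
      show "u \<in> cyl z m"
      proof (cases "y \<in> PP \<nu>")
        case True then show ?thesis using y unfolding k_def by simp
      next
        case False
        then have "k y \<in> cyl z (max m (N y))" using img y by blast
        then show ?thesis using y cyl_mono[of m "max m (N y)" z] by auto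
      qed
    qed
    show "\<forall>x\<in>W. \<forall>b. k x \<in> G b \<longrightarrow> x \<in> F b"
    proof (intro ballI allI impI)
      fix y b assume y: "y \<in> W" and kb: "k y \<in> G b"
      show "y \<in> F b"
      proof (cases "y \<in> PP \<nu>")
        case True
        then have "z \<in> G b" using kb unfolding k_def by simp
        then have "b = e" using zG by (cases b; cases e) auto
        then show ?thesis using top True y by blast
      next
        case False
        then have yW: "y \<in> W - PP \<nu>" using y by blast
        have "spec (canon y (N y)) (N y) (K (canon y (N y)) (N y))" by (rule K[OF Kc[OF yW]])
        then have "\<forall>u\<in>cyl y (N y). \<forall>b. K (canon y (N y)) (N y) u \<in> G b \<longrightarrow> u \<in> F b"
          unfolding spec_def cyl_canon by blast
        then show ?thesis using kb k_loc[OF yW in_cyl] by auto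
      qed
    qed
    show "continuous_on W k"
      unfolding continuous_on_topological
    proof (intro ballI allI impI)
      fix x assume xW: "x \<in> W"
      show "\<And>B. open B \<Longrightarrow> k x \<in> B \<Longrightarrow> \<exists>A. open A \<and> x \<in> A \<and> (\<forall>y\<in>W. y \<in> A \<longrightarrow> k y \<in> B)"
      proof -
        fix B assume B: "open B" "k x \<in> B"
        show "\<exists>A. open A \<and> x \<in> A \<and> (\<forall>y\<in>W. y \<in> A \<longrightarrow> k y \<in> B)"
        proof (cases "x \<in> PP \<nu>")
          case True
          then have "z \<in> B" using B unfolding k_def by simp
          then obtain j where j: "cyl z j \<subseteq> B" using cyl_basis B(1) by blast
          show ?thesis
          proof (intro exI conjI ballI impI)
            show "open (cyl x j)" by (rule open_cyl)
            show "x \<in> cyl x j" by simp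
            fix y assume y: "y \<in> W" "y \<in> cyl x j"
            show "k y \<in> B"
            proof (cases "y \<in> PP \<nu>")
              case True then show ?thesis using y \<open>z \<in> B\<close> unfolding k_def by simp
            next
              case False
              then have yW: "y \<in> W - PP \<nu>" using y by blast
              have "\<not> N y \<le> j"
              proof
                assume "N y \<le> j"
                then have "x \<in> cyl y (N y)" using cyl_sym[OF y(2)] cyl_mono by blast
                then show False using goodN[OF yW] True unfolding good_def by blast
              qed
              then have "cyl z (max m (N y)) \<subseteq> cyl z j" by (intro cyl_mono) simp
              then show ?thesis using img[OF yW] j by blast
            qed
          qed
        next
          case False
          then have xW': "x \<in> W - PP \<nu>" using xW by blast
          define n where "n = N x"
          define c where "c = canon x n"
          have sp: "spec c n (K c n)" unfolding c_def n_def by (rule K[OF Kc[OF xW']])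
          then have cK: "continuous_on (cyl x n) (K c n)" unfolding spec_def c_def cyl_canon by blast
          have kx: "k x = K c n x" using k_loc[OF xW' in_cyl] unfolding c_def n_def by simp
          obtain A where A: "open A" "x \<in> A" "\<forall>y\<in>cyl x n. y \<in> A \<longrightarrow> K c n y \<in> B"
            using cK B kx in_cyl[of x n] unfolding continuous_on_topological by metis
          show ?thesis
          proof (intro exI conjI ballI impI)
            show "open (A \<inter> cyl x n)" using A(1) open_cyl by blast
            show "x \<in> A \<inter> cyl x n" using A(2) by simp
            fix y assume y: "y \<in> W" "y \<in> A \<inter> cyl x n"
            have "k y = K c n y" using k_loc[OF xW'] y unfolding c_def n_def by blast
            then show "k y \<in> B" using A(3) y by auto
          qed
        qed
      qed
    qed
  qed
qed

lemma Fset_cover: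
  assumes "\<delta> > 0"
  shows "z \<in> Fset g q \<delta> True \<or> z \<in> Fset g q \<delta> False"
proof -
  have "real_of_rat (q - \<delta>) < real_of_rat (q + \<delta>)" using assms by (simp add: of_rat_less)
  then show ?thesis unfolding Fset_def by auto
qed

lemma shift:
  assumes "\<delta> > 0"
  shows "\<exists>q' \<delta>' b0. \<delta>' > 0 \<and> y \<notin> Fset g q' \<delta>' b0 \<and> (\<forall>b. Fset g q' \<delta>' b \<subseteq> Fset g q \<delta> b)"
proof (cases "g y \<le> real_of_rat (q - \<delta>)")
  case True
  then show ?thesis using assms by (intro exI[of _ q] exI[of _ \<delta>] exI[of _ False]) (auto simp: Fset_def)
next
  case False
  define a where "a = q - \<delta>"
  have "real_of_rat a < min (g y) (real_of_rat (q + \<delta>))"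
    using False assms unfolding a_def by (simp add: of_rat_less)
  then obtain c where c: "real_of_rat a < real_of_rat c" "real_of_rat c < min (g y) (real_of_rat (q + \<delta>))"
    using of_rat_dense by blast
  have ac: "a < c" using c(1) by (simp add: of_rat_less)
  define q' where "q' = (a + c) / 2"
  define \<delta>' where "\<delta>' = (c - a) / 2"
  have e1: "q' + \<delta>' = c" "q' - \<delta>' = a" unfolding q'_def \<delta>'_def by (simp_all add: field_simps)
  have "\<delta>' > 0" unfolding \<delta>'_def using ac by simp
  moreover have "y \<notin> Fset g q' \<delta>' True" using c(2) unfolding Fset_def e1 by auto
  moreover have "\<forall>b. Fset g q' \<delta>' b \<subseteq> Fset g q \<delta> b"
  proof
    fix b show "Fset g q' \<delta>' b \<subseteq> Fset g q \<delta> b"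
      using c(2) unfolding Fset_def e1 a_def by (cases b) auto
  qed
  ultimately show ?thesis by blast
qed

definition rep :: "bool list \<Rightarrow> cantor" where
  "rep \<sigma> = (\<lambda>i. if i < length \<sigma> then \<sigma> ! i else False)"

lemma rep_map: "rep (map A [0..<r]) = canon A r"
  by (auto simp: rep_def canon_def)

lemma rank_imp:
  assumes bf: "baire1 f" and bg: "baire1 g" and le: "bourgain_rank f \<le> bourgain_rank g"
  shows "tt1_le f g"
  unfolding tt1_le_def
proof (intro allI impI)
  fix p \<epsilon> :: rat assume e: "\<epsilon> > 0"
  define F where "F = Fset f p \<epsilon>"
  define PP :: "cord \<Rightarrow> cantor set" where "PP = opt_deriv {F True, F False}"
  define \<alpha> where "\<alpha> = alpha_rank f p \<epsilon>"
  have PPa: "PP \<alpha> = {}" unfolding PP_def F_def \<alpha>_def Fset_pair by (rule alpha_empty[OF bf e])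
  have "\<forall>x. \<exists>t. fst t < \<alpha> \<and> PP (fst t) \<inter> cyl x (fst (snd t)) \<subseteq> F (snd (snd t))"
  proof
    fix x
    have "x \<notin> PP \<alpha>" using PPa by blast
    then obtain \<pi> U e' where pU: "\<pi> < \<alpha>" "open U" "x \<in> U" "PP \<pi> \<inter> U \<subseteq> F e'"
      using level_ex[of x F \<alpha>] unfolding PP_def by blast
    then obtain n where "cyl x n \<subseteq> U" using cyl_basis by blast
    then show "\<exists>t. fst t < \<alpha> \<and> PP (fst t) \<inter> cyl x (fst (snd t)) \<subseteq> F (snd (snd t))"
      using pU by (intro exI[of _ "(\<pi>, n, e')"]) auto
  qed
  then obtain T where T: "\<And>x. fst (T x) < \<alpha> \<and> PP (fst (T x)) \<inter> cyl x (fst (snd (T x))) \<subseteq> F (snd (snd (T x)))"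
    by metis
  have "UNIV \<subseteq> (\<Union>x\<in>UNIV. cyl x (fst (snd (T x))))" using in_cyl by blast
  then obtain D where D: "finite D" "UNIV \<subseteq> (\<Union>x\<in>D. cyl x (fst (snd (T x))))"
    using compactE_image[OF compact_cantor, of UNIV "\<lambda>x. cyl x (fst (snd (T x)))"] open_cyl by metis
  have Dne: "D \<noteq> {}" using D(2) by auto
  define r where "r = Max ((\<lambda>x. fst (snd (T x))) ` D)"
  define \<mu> where "\<mu> = Max ((\<lambda>x. fst (T x)) ` D)"
  have \<mu>a: "\<mu> < \<alpha>" unfolding \<mu>_def using D(1) Dne T by (subst Max_less_iff) auto
  have loc: "\<exists>e. PP \<mu> \<inter> cyl A r \<subseteq> F e" for A
  proof -
    obtain x where x: "x \<in> D" "A \<in> cyl x (fst (snd (T x)))" using D(2) by blast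
    have "fst (snd (T x)) \<le> r" unfolding r_def using D(1) x(1) by simp
    then have "cyl A r \<subseteq> cyl x (fst (snd (T x)))" using cyl_mono cyl_same[OF x(2)] by blast
    moreover have "PP \<mu> \<subseteq> PP (fst (T x))" unfolding PP_def using D(1) x(1) by (intro od_anti) (simp add: \<mu>_def)
    ultimately show ?thesis using T[of x] by blast
  qed
  have "\<mu> < bourgain_rank g"
    using \<mu>a alpha_le_bourgain[OF bf e, of p] le unfolding \<alpha>_def by simp
  moreover have "bourgain_rank g \<le> \<mu>" if "\<forall>q \<delta>. \<delta> > 0 \<longrightarrow> alpha_rank g q \<delta> \<le> \<mu>"
    unfolding bourgain_rank_def using that by (rule Least_le)
  ultimately obtain q \<delta> where qd: "\<delta> > 0" "\<not> alpha_rank g q \<delta> \<le> \<mu>"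
    using leD by blast
  then have "opt_deriv {g -` {..< real_of_rat (q + \<delta>)}, g -` {real_of_rat (q - \<delta>) <..}} \<mu> \<noteq> {}"
    unfolding alpha_rank_def using not_less_Least by (metis not_le)
  then obtain y where y: "y \<in> opt_deriv {Fset g q \<delta> True, Fset g q \<delta> False} \<mu>"
    unfolding Fset_pair by blast
  obtain q' \<delta>' b0 where s: "\<delta>' > 0" "y \<notin> Fset g q' \<delta>' b0" "\<forall>b. Fset g q' \<delta>' b \<subseteq> Fset g q \<delta> b"
    using shift[OF qd(1)] by blast
  define G where "G = Fset g q' \<delta>'"
  have "opt_deriv {Fset g q \<delta> True, Fset g q \<delta> False} \<mu> \<subseteq> id -` opt_deriv {G True, G False} \<mu>"
    by (rule od_pull[where k=id and r=0 and h="\<lambda>_ b. b"]) (use s(3) G_def in auto)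
  then have yQ: "y \<in> opt_deriv {G True, G False} \<mu>" using y by auto
  define ef where "ef x = (SOME e. PP \<mu> \<inter> cyl x r \<subseteq> F e)" for x
  have ef: "PP \<mu> \<inter> cyl x r \<subseteq> F (ef x)" for x unfolding ef_def using loc by (rule someI_ex)
  define c where "c x = (b0 = (\<not> ef x))" for x
  define G2 where "G2 x b = G (b = c x)" for x b
  have G2pair: "{G2 x True, G2 x False} = {G True, G False}" for x
    unfolding G2_def by (cases "c x") auto
  have hG2: "z \<in> G2 x True \<or> z \<in> G2 x False" for x z
    using Fset_cover[OF s(1), of z g q'] unfolding G2_def G_def by (cases "c x") auto
  have exK: "\<exists>kk. continuous_on (cyl x r) kk \<and> (\<forall>z\<in>cyl x r. \<forall>b. kk z \<in> G2 x b \<longrightarrow> z \<in> F b)" for x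
  proof -
    have "y \<notin> G2 x (\<not> ef x)" using s(2) unfolding G2_def c_def G_def by (cases b0; cases "ef x") auto
    moreover have "y \<in> opt_deriv {G2 x True, G2 x False} \<mu>" using yQ G2pair by simp
    moreover have "opt_deriv {F True, F False} \<mu> \<inter> cyl x r \<subseteq> F (ef x)" using ef unfolding PP_def .
    ultimately show ?thesis using embed[of "G2 x" "cyl x r" F \<mu> "ef x" y 0, OF hG2 open_cyl] by blast
  qed
  define KK where "KK x = (SOME kk. continuous_on (cyl x r) kk \<and> (\<forall>z\<in>cyl x r. \<forall>b. kk z \<in> G2 x b \<longrightarrow> z \<in> F b))" for x
  have KK: "continuous_on (cyl x r) (KK x) \<and> (\<forall>z\<in>cyl x r. \<forall>b. KK x z \<in> G2 x b \<longrightarrow> z \<in> F b)" for x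
    unfolding KK_def using exK by (rule someI_ex)
  define k where "k A = KK (canon A r) A" for A
  define h where "h \<sigma> b' = (b' = c (rep \<sigma>))" for \<sigma> b'
  show "\<exists>k q \<delta> r h. continuous_on UNIV k \<and> \<delta> > 0 \<and>
        (\<forall>A b. correct_answer (g (k A)) q \<delta> b \<longrightarrow> correct_answer (f A) p \<epsilon> (h (map A [0..<r]) b))"
  proof (intro exI conjI allI impI)
    show "\<delta>' > 0" by (rule s(1))
    fix A b assume ca: "correct_answer (g (k A)) q' \<delta>' b"
    define x where "x = canon A r"
    have Ax: "A \<in> cyl x r" unfolding x_def using cyl_sym[OF canon_in] .
    have "k A \<in> G b" using ca unfolding G_def k_def by (simp add: correct_Fset)
    moreover have "G b = G2 x (h (map A [0..<r]) b)"
      unfolding G2_def h_def rep_map x_def by (cases "c (canon A r)") auto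
    ultimately have "KK x A \<in> G2 x (h (map A [0..<r]) b)" unfolding k_def x_def by simp
    then have "A \<in> F (h (map A [0..<r]) b)" using KK[of x] Ax by blast
    then show "correct_answer (f A) p \<epsilon> (h (map A [0..<r]) b)" unfolding F_def by (simp add: correct_Fset)
  next
    show "continuous_on UNIV k"
      unfolding continuous_on_topological
    proof (intro ballI allI impI)
      fix A B assume B: "open B" "k A \<in> B"
      define x where "x = canon A r"
      have Ax: "A \<in> cyl x r" unfolding x_def using cyl_sym[OF canon_in] .
      have kx: "k z = KK x z" if "z \<in> cyl A r" for z
        unfolding k_def x_def using canon_cyl[OF that] by simp
      obtain Ob where O: "open Ob" "A \<in> Ob" "\<forall>z\<in>cyl x r. z \<in> Ob \<longrightarrow> KK x z \<in> B"
        using KK[of x] B kx[OF in_cyl] Ax unfolding continuous_on_topological by metis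
      have cx: "cyl x r = cyl A r" using cyl_same[OF Ax] by simp
      show "\<exists>O'. open O' \<and> A \<in> O' \<and> (\<forall>z\<in>UNIV. z \<in> O' \<longrightarrow> k z \<in> B)"
        using O kx cx open_cyl[of A r] by (intro exI[of _ "Ob \<inter> cyl A r"]) auto
    qed
  qed
qed

theorem mainTheorem4:
  fixes f g :: "cantor \<Rightarrow> real"
  assumes "baire1 f" and "baire1 g"
  shows "tt1_le f g \<longleftrightarrow> bourgain_rank f \<le> bourgain_rank g"
  using tt1_imp[OF assms(2)] rank_imp[OF assms] by blast

end
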